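(* Let $q$ be a prime power and $a,r,g,h,m$ positive integers with $a\le r\le q+1$, $m\ge h+a$ and $ga+h<gr$; put $n=rg$. If $q^m\ge \frac{mn}{r}$, then there exists an MR $(n,r,h,a)$-LRC over a field of size $\ell=q^{\min\{mh,\frac{mn}{r}\}}$.
   Context: Definition: let $\ell$ be a prime power, $a,g,r,h$ positive integers with $ga+h<gr$, $n=gr$, $k=n-ga-h$. An MR (maximally recoverable) $(n,r,h,a)_\ell$-LRC is an $[n,k]$ linear code over $\mathbb{F}_\ell$ with a parity-check matrix $H$ of the block form whose first $ga$ rows are block diagonal with diagonal blocks $A_1,\dots,A_g$ (each $a\times r$, coordinates split into $g$ consecutive groups of size $r$) and whose last $h$ rows are $(D_1|\cdots|D_g)$ with each $D_i$ of size $h\times r$, such that (i) each $A_i$ generates an $[r,a,r-a+1]_\ell$ MDS code, and (ii) every set of $ag+h$ columns of $H$ consisting of any $a$ columns from each group together with any $h$ further columns is linearly independent over $\mathbb{F}_\ell$. "Over a field of size $\ell$" means an MR $(n,r,h,a)_\ell$-LRC. *)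

theory Defs
  imports Complex_Main "HOL-Computational_Algebra.Primes"
begin

text \<open>Matrices over a field 'F are functions nat => nat => 'F (row, column),
only entries with indices in range are relevant.\<close>

definition prime_power :: "nat \<Rightarrow> bool" where
  "prime_power q \<longleftrightarrow> (\<exists>p k. prime p \<and> k > 0 \<and> q = p ^ k)"

definition mds_generator :: "(nat \<Rightarrow> nat \<Rightarrow> 'F::field) \<Rightarrow> nat \<Rightarrow> nat \<Rightarrow> bool" where
  "mds_generator A a r \<longleftrightarrow>
     (\<forall>c. (\<forall>j<r. (\<Sum>i<a. c i * A i j) = 0) \<longrightarrow> (\<forall>i<a. c i = 0)) \<and>
     Min {card {j. j < r \<and> (\<Sum>i<a. c i * A i j) \<noteq> 0} | c. \<exists>i<a. c i \<noteq> 0} = r - a + 1"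

definition cols_indep :: "(nat \<Rightarrow> nat \<Rightarrow> 'F::field) \<Rightarrow> nat \<Rightarrow> nat set \<Rightarrow> bool" where
  "cols_indep H nrows S \<longleftrightarrow>
     (\<forall>c. (\<forall>i<nrows. (\<Sum>j\<in>S. c j * H i j) = 0) \<longrightarrow> (\<forall>j\<in>S. c j = 0))"

text \<open>H is a (g*a+h) x (g*r) parity-check matrix of an MR (n,r,h,a)-LRC, n = g*r,
  i.e. of an [n, n-ga-h] code: rows independent (so the kernel has dimension n-ga-h),
  the first g*a rows are block diagonal with a x r blocks A_1..A_g (coordinates
  split into g consecutive groups of size r), each A_b generates an MDS [r,a,r-a+1]
  code, and every set of ga+h columns containing a columns from each group
  (plus h further columns) is linearly independent.\<close>
definition MR_LRC_parity_check ::
  "(nat \<Rightarrow> nat \<Rightarrow> 'F::field) \<Rightarrow> nat \<Rightarrow> nat \<Rightarrow> nat \<Rightarrow> nat \<Rightarrow> bool" where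
  "MR_LRC_parity_check H g r h a \<longleftrightarrow>
     (\<forall>c. (\<forall>j<g*r. (\<Sum>i<g*a+h. c i * H i j) = 0) \<longrightarrow> (\<forall>i<g*a+h. c i = 0)) \<and>
     (\<forall>i<g*a. \<forall>j<g*r. j div r \<noteq> i div a \<longrightarrow> H i j = 0) \<and>
     (\<forall>b<g. mds_generator (\<lambda>i j. H (b*a + i) (b*r + j)) a r) \<and>
     (\<forall>S. S \<subseteq> {..<g*r} \<and> card S = g*a + h \<and>
          (\<forall>b<g. a \<le> card (S \<inter> {b*r..<(b+1)*r})) \<longrightarrow> cols_indep H (g*a+h) S)"

end

theory Submission
  imports Defs "HOL-Computational_Algebra.Polynomial" "HOL-Library.FuncSet"
begin

definition fset_on :: "'x set \<Rightarrow> 'b set \<Rightarrow> 'b \<Rightarrow> ('x \<Rightarrow> 'b) set" where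
  "fset_on A B d = {f. \<forall>x. (x \<in> A \<longrightarrow> f x \<in> B) \<and> (x \<notin> A \<longrightarrow> f x = d)}"

lemma finite_fset_on: "finite A \<Longrightarrow> finite B \<Longrightarrow> finite (fset_on A B d)"
  unfolding fset_on_def by (rule finite_set_of_finite_funs)

lemma card_fset_on:
  assumes "finite A" "finite B"
  shows "card (fset_on A B d) = card B ^ card A"
proof -
  have "bij_betw (\<lambda>f. restrict f A) (fset_on A B d) (PiE A (\<lambda>_. B))"
  proof (rule bij_betw_byWitness[where f'="\<lambda>g x. if x \<in> A then g x else d"])
    show "\<forall>a\<in>fset_on A B d. (\<lambda>x. if x \<in> A then restrict a A x else d) = a"
      by (auto simp: fset_on_def fun_eq_iff)
    show "\<forall>a'\<in>PiE A (\<lambda>_. B). restrict (\<lambda>x. if x \<in> A then a' x else d) A = a'"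
      by (auto simp: fun_eq_iff PiE_def extensional_def)
    show "(\<lambda>f. restrict f A) ` fset_on A B d \<subseteq> PiE A (\<lambda>_. B)"
      by (auto simp: fset_on_def)
    show "(\<lambda>g x. if x \<in> A then g x else d) ` PiE A (\<lambda>_. B) \<subseteq> fset_on A B d"
      by (auto simp: fset_on_def)
  qed
  then have "card (fset_on A B d) = card (PiE A (\<lambda>_. B))" by (rule bij_betw_same_card)
  also have "\<dots> = card B ^ card A" using assms by (simp add: card_PiE)
  finally show ?thesis .
qed

abbreviation fs :: "'x set \<Rightarrow> ('x \<Rightarrow> 'b::{zero}) set" where
  "fs A \<equiv> fset_on A UNIV 0"

lemma fs_iff: "f \<in> fs A \<longleftrightarrow> (\<forall>x. x \<notin> A \<longrightarrow> f x = 0)"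
  by (auto simp: fset_on_def)

lemma card_fs: "finite A \<Longrightarrow> card (fs A :: ('x \<Rightarrow> 'b::{zero,finite}) set) = card (UNIV :: 'b set) ^ card A"
  by (simp add: card_fset_on)

lemma finite_fs: "finite A \<Longrightarrow> finite (fs A :: ('x \<Rightarrow> 'b::{zero,finite}) set)"
  by (simp add: finite_fset_on)

lemma vandermonde_indep:
  fixes \<alpha> :: "nat \<Rightarrow> 'a::field"
  assumes fin: "finite T" and inj: "inj_on \<alpha> T" and cardT: "card T \<le> k"
    and eq: "\<forall>t<k. (\<Sum>j\<in>T. c j * \<alpha> j ^ t) = 0" and j0: "j0 \<in> T"
  shows "c j0 = 0"
proof -
  define p where "p = (\<Prod>j\<in>T-{j0}. [:- \<alpha> j, 1:])"
  have "degree p \<le> sum (degree \<circ> (\<lambda>j. [:- \<alpha> j, 1:])) (T-{j0})"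
    unfolding p_def by (rule degree_prod_sum_le) (use fin in auto)
  also have "\<dots> = card (T-{j0})" by simp
  also have "\<dots> < card T" using fin j0 by (rule card_Diff1_less)
  finally have degp: "degree p < k" using cardT by linarith
  have polyeq: "poly p x = (\<Sum>t<k. coeff p t * x ^ t)" for x
  proof -
    have "poly p x = (\<Sum>t\<le>degree p. coeff p t * x ^ t)" by (rule poly_altdef)
    also have "\<dots> = (\<Sum>t<k. coeff p t * x ^ t)"
      by (rule sum.mono_neutral_left) (use degp in \<open>auto simp: coeff_eq_0\<close>)
    finally show ?thesis .
  qed
  have "0 = (\<Sum>t<k. coeff p t * (\<Sum>j\<in>T. c j * \<alpha> j ^ t))" using eq by simp
  also have "\<dots> = (\<Sum>t<k. \<Sum>j\<in>T. c j * (coeff p t * \<alpha> j ^ t))"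
    by (simp add: sum_distrib_left mult_ac)
  also have "\<dots> = (\<Sum>j\<in>T. \<Sum>t<k. c j * (coeff p t * \<alpha> j ^ t))"
    by (rule sum.swap)
  also have "\<dots> = (\<Sum>j\<in>T. c j * (\<Sum>t<k. coeff p t * \<alpha> j ^ t))"
    by (simp add: sum_distrib_left)
  also have "\<dots> = (\<Sum>j\<in>T. c j * poly p (\<alpha> j))" by (simp add: polyeq)
  also have "\<dots> = (\<Sum>j\<in>{j0}. c j * poly p (\<alpha> j))"
  proof (rule sum.mono_neutral_right)
    show "\<forall>i\<in>T - {j0}. c i * poly p (\<alpha> i) = 0"
      using fin by (auto simp: p_def poly_prod)
  qed (use fin j0 in auto)
  finally have "c j0 * poly p (\<alpha> j0) = 0" by simp
  moreover have "poly p (\<alpha> j0) \<noteq> 0"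
    using fin j0 inj by (auto simp: p_def poly_prod inj_on_def)
  ultimately show ?thesis by simp
qed

definition colv :: "nat \<Rightarrow> 'a::field option \<Rightarrow> nat \<Rightarrow> 'a" where
  "colv k p t = (case p of None \<Rightarrow> (if t = k - 1 then 1 else 0) | Some x \<Rightarrow> x ^ t)"

lemma gvand_indep:
  fixes pt :: "nat \<Rightarrow> 'a::field option"
  assumes fin: "finite T" and inj: "inj_on pt T" and cardT: "card T \<le> k"
    and eq: "\<forall>t<k. (\<Sum>j\<in>T. c j * colv k (pt j) t) = 0"
  shows "\<forall>j\<in>T. c j = 0"
proof (cases "\<exists>j\<in>T. pt j = None")
  case False
  then have ptS: "\<forall>j\<in>T. pt j \<noteq> None" by auto
  have inj2: "inj_on (\<lambda>j. the (pt j)) T"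
  proof (rule inj_onI)
    fix x y assume "x \<in> T" "y \<in> T" "the (pt x) = the (pt y)"
    then have "pt x = pt y" using ptS by (metis option.collapse)
    then show "x = y" using inj \<open>x \<in> T\<close> \<open>y \<in> T\<close> by (simp add: inj_on_def)
  qed
  have "\<forall>t<k. (\<Sum>j\<in>T. c j * (the (pt j)) ^ t) = 0"
  proof (intro allI impI)
    fix t assume "t < k"
    have "(\<Sum>j\<in>T. c j * (the (pt j)) ^ t) = (\<Sum>j\<in>T. c j * colv k (pt j) t)"
      by (rule sum.cong) (use ptS in \<open>auto simp: colv_def split: option.split\<close>)
    then show "(\<Sum>j\<in>T. c j * (the (pt j)) ^ t) = 0" using eq \<open>t<k\<close> by simp
  qed
  then show ?thesis using vandermonde_indep[OF fin inj2 cardT] by blast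
next
  case True
  then obtain ji where ji: "ji \<in> T" "pt ji = None" by auto
  define T' where "T' = T - {ji}"
  have finT': "finite T'" using fin by (simp add: T'_def)
  have ptS: "\<forall>j\<in>T'. pt j \<noteq> None"
  proof
    fix j assume j: "j \<in> T'"
    show "pt j \<noteq> None"
    proof
      assume "pt j = None"
      then have "pt j = pt ji" using ji by simp
      then have "j = ji" using inj j ji unfolding T'_def inj_on_def by blast
      then show False using j unfolding T'_def by simp
    qed
  qed
  have inj2: "inj_on (\<lambda>j. the (pt j)) T'"
  proof (rule inj_onI)
    fix x y assume "x \<in> T'" "y \<in> T'" "the (pt x) = the (pt y)"
    then have "pt x = pt y" using ptS by (metis option.collapse)
    then show "x = y" using inj \<open>x \<in> T'\<close> \<open>y \<in> T'\<close> by (simp add: inj_on_def T'_def)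
  qed
  have cT': "card T' \<le> k - 1" using cardT ji fin by (simp add: T'_def)
  have kpos: "k > 0" using cardT ji fin card_gt_0_iff by fastforce
  have split: "(\<Sum>j\<in>T. f j) = f ji + (\<Sum>j\<in>T'. f j)" for f :: "nat \<Rightarrow> 'a"
    unfolding T'_def using fin ji by (simp add: sum.remove)
  have "\<forall>t<k-1. (\<Sum>j\<in>T'. c j * (the (pt j)) ^ t) = 0"
  proof (intro allI impI)
    fix t assume t: "t < k - 1"
    have "(\<Sum>j\<in>T'. c j * (the (pt j)) ^ t) = (\<Sum>j\<in>T'. c j * colv k (pt j) t)"
      by (rule sum.cong) (use ptS in \<open>auto simp: colv_def split: option.split\<close>)
    also have "\<dots> = (\<Sum>j\<in>T. c j * colv k (pt j) t)"
      using split[of "\<lambda>j. c j * colv k (pt j) t"] ji t by (simp add: colv_def)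
    finally show "(\<Sum>j\<in>T'. c j * (the (pt j)) ^ t) = 0" using eq t by simp
  qed
  then have c0: "\<forall>j\<in>T'. c j = 0" using vandermonde_indep[OF finT' inj2 cT'] by blast
  have "0 = (\<Sum>j\<in>T. c j * colv k (pt j) (k-1))" using eq kpos by simp
  also have "\<dots> = c ji" using split[of "\<lambda>j. c j * colv k (pt j) (k-1)"] ji c0 by (simp add: colv_def)
  finally have "c ji = 0" by simp
  then show ?thesis using c0 unfolding T'_def by blast
qed

lemma square_surj:
  fixes M :: "nat \<Rightarrow> nat \<Rightarrow> 'F::{field,finite}"
  assumes finR: "finite R" and finT: "finite T" and cRT: "card R = card T"
    and indep: "\<forall>x. (\<forall>i\<in>R. (\<Sum>j\<in>T. x j * M i j) = 0) \<longrightarrow> (\<forall>j\<in>T. x j = 0)"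
  shows "\<exists>x. \<forall>i\<in>R. (\<Sum>j\<in>T. x j * M i j) = y i"
proof -
  define f where "f x = (\<lambda>i. if i \<in> R then (\<Sum>j\<in>T. x j * M i j) else 0)" for x :: "nat \<Rightarrow> 'F"
  have injf: "inj_on f (fs T)"
  proof (rule inj_onI)
    fix x x' assume x: "x \<in> fs T" and x': "x' \<in> fs T" and fe: "f x = f x'"
    have "\<forall>i\<in>R. (\<Sum>j\<in>T. (x j - x' j) * M i j) = 0"
    proof
      fix i assume i: "i \<in> R"
      have "(\<Sum>j\<in>T. x j * M i j) = (\<Sum>j\<in>T. x' j * M i j)" using fe i unfolding f_def by meson
      then show "(\<Sum>j\<in>T. (x j - x' j) * M i j) = 0"
        by (simp add: left_diff_distrib sum_subtractf)
    qed
    then have "\<forall>j\<in>T. x j - x' j = 0" using indep[THEN spec, of "\<lambda>j. x j - x' j"] by blast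
    then show "x = x'" using x x' by (auto simp: fs_iff fun_eq_iff)
  qed
  have sub: "f ` fs T \<subseteq> fs R" by (auto simp: fs_iff f_def)
  have "card (f ` fs T) = card (fs R :: (nat \<Rightarrow> 'F) set)"
    using card_image[OF injf] by (simp add: card_fs finT finR cRT)
  then have eqim: "f ` fs T = fs R"
    using card_subset_eq[OF finite_fs[OF finR] sub] by simp
  have "(\<lambda>i. if i \<in> R then y i else 0) \<in> fs R" by (auto simp: fs_iff)
  then have "(\<lambda>i. if i \<in> R then y i else 0) \<in> f ` fs T" using eqim by simp
  then obtain x where "(\<lambda>i. if i \<in> R then y i else 0) = f x"
    by (rule imageE)
  then have "f x = (\<lambda>i. if i \<in> R then y i else 0)" by simp
  then have "\<forall>i\<in>R. (\<Sum>j\<in>T. x j * M i j) = y i"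
    unfolding f_def by (auto simp: fun_eq_iff split: if_splits)
  then show ?thesis by blast
qed

lemma square_rows_indep:
  fixes M :: "nat \<Rightarrow> nat \<Rightarrow> 'F::{field,finite}"
  assumes finR: "finite R" and finT: "finite T" and cRT: "card R = card T"
    and indep: "\<forall>x. (\<forall>i\<in>R. (\<Sum>j\<in>T. x j * M i j) = 0) \<longrightarrow> (\<forall>j\<in>T. x j = 0)"
    and ceq: "\<forall>j\<in>T. (\<Sum>i\<in>R. c i * M i j) = 0"
  shows "\<forall>i\<in>R. c i = 0"
proof
  fix i0 assume i0: "i0 \<in> R"
  obtain x where x: "\<forall>i\<in>R. (\<Sum>j\<in>T. x j * M i j) = (if i = i0 then 1 else 0)"
    using square_surj[OF finR finT cRT indep, of "\<lambda>i. if i = i0 then 1 else 0"] by blast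
  have "c i0 = (\<Sum>i\<in>R. if i = i0 then c i else 0)" using i0 finR by (simp add: sum.delta)
  also have "\<dots> = (\<Sum>i\<in>R. c i * (if i = i0 then 1 else 0))" by (rule sum.cong) auto
  also have "\<dots> = (\<Sum>i\<in>R. c i * (\<Sum>j\<in>T. x j * M i j))"
    by (rule sum.cong) (use x in auto)
  also have "\<dots> = (\<Sum>i\<in>R. \<Sum>j\<in>T. x j * (c i * M i j))"
    by (simp add: sum_distrib_left mult_ac)
  also have "\<dots> = (\<Sum>j\<in>T. \<Sum>i\<in>R. x j * (c i * M i j))"
    by (rule sum.swap)
  also have "\<dots> = (\<Sum>j\<in>T. x j * (\<Sum>i\<in>R. c i * M i j))"
    by (simp add: sum_distrib_left)
  also have "\<dots> = 0" using ceq by simp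
  finally show "c i0 = 0" .
qed

lemma of_nat_card_zero: "of_nat (card (UNIV :: 'F::{field,finite} set)) = (0::'F)"
proof -
  have "(\<Sum>x\<in>(UNIV::'F set). x + 1) = (\<Sum>x\<in>UNIV. x)"
    by (rule sum.reindex_bij_witness[of _ "\<lambda>x. x - 1" "\<lambda>x. x + 1"]) auto
  then have "(\<Sum>x\<in>(UNIV::'F set). x) + of_nat (card (UNIV :: 'F set)) = (\<Sum>x\<in>UNIV. x)"
    by (simp add: sum.distrib)
  then show ?thesis by simp
qed

lemma char_prime: "prime CHAR('F::{field,finite})"
  by (rule prime_CHAR_semidom) (rule finite_imp_CHAR_pos, simp)

lemma fermat_field:
  fixes x :: "'F::{field,finite}"
  shows "x ^ card (UNIV :: 'F set) = x"
proof (cases "x = 0")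
  case False
  have "x * (\<Prod>y\<in>UNIV-{0}. x * y) = x * x ^ (card (UNIV :: 'F set) - 1) * \<Prod>(UNIV-{0})"
    by (simp add: prod.distrib mult_ac)
  also have "x * x ^ (card (UNIV :: 'F set) - 1) = x ^ Suc (card (UNIV :: 'F set) - 1)"
    by (subst power_Suc) auto
  also have "Suc (card (UNIV :: 'F set) - 1) = card (UNIV :: 'F set)"
    using finite_UNIV_card_ge_0[where ?'a = 'F] by simp
  also have "(\<Prod>y\<in>UNIV-{0}. x * y) = (\<Prod>y\<in>UNIV-{0}. y)"
    by (rule prod.reindex_bij_witness[of _ "\<lambda>y. y / x" "\<lambda>y. x * y"]) (use False in auto)
  finally show ?thesis
    by simp
qed (use finite_UNIV_card_ge_0[where ?'a = 'F] in auto)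

lemma card_fix_le:
  fixes Q :: nat
  assumes "Q \<ge> 2"
  shows "card {x::'F::{field,finite}. x ^ Q = x} \<le> Q"
proof -
  define p :: "'F poly" where "p = monom 1 Q - [:0,1:]"
  have pe: "poly p x = x ^ Q - x" for x by (simp add: p_def poly_monom)
  have "coeff p Q = 1" using assms by (simp add: p_def coeff_pCons split: nat.split)
  then have p0: "p \<noteq> 0" by auto
  have dp: "degree p \<le> Q" unfolding p_def
    by (rule degree_diff_le) (use assms in \<open>auto simp: degree_monom_le\<close>)
  have "{x::'F. x ^ Q = x} = {x. poly p x = 0}" by (auto simp: pe)
  then show ?thesis using card_poly_roots_bound[OF p0] dp by simp
qed

lemma card_fix_ge:
  fixes Q t :: nat
  assumes cardF: "card (UNIV :: 'F::{field,finite} set) = Q ^ t" and t: "t \<ge> 1" and Q: "Q \<ge> 2"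
  shows "card {x::'F. x ^ Q = x} \<ge> Q"
proof -
  define n where "n = (\<Sum>i<t. Q ^ i)"
  have "int Q ^ t - 1 = (int Q - 1) * (\<Sum>i<t. int Q ^ i)" by (rule power_diff_1_eq)
  then have e1: "int (Q ^ t) - 1 = (int Q - 1) * int n" by (simp add: n_def)
  have Qt1: "Q ^ t \<ge> 1" using Q by simp
  have "int ((Q - 1) * n) = int (Q ^ t - 1)" using e1 Q Qt1 by (simp add: of_nat_diff)
  then have nQ: "(Q - 1) * n = Q ^ t - 1" by (rule of_nat_eq_iff[THEN iffD1])
  have QtQ: "Q ^ t \<ge> Q" using power_increasing[of 1 t Q] t Q by simp
  have n1: "n \<ge> 1"
  proof -
    have "Q ^ 0 \<le> n" unfolding n_def by (rule member_le_sum) (use t in auto)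
    then show ?thesis by simp
  qed
  define G :: "'F poly" where "G = (\<Sum>i<n. monom 1 ((Q - 1) * i))"
  have pG: "poly G x = (\<Sum>i<n. x ^ ((Q - 1) * i))" for x
    by (simp add: G_def poly_sum poly_monom)
  have "poly G 0 = (\<Sum>i<n. if i = 0 then 1 else 0)"
    unfolding pG by (rule sum.cong) (use Q in \<open>auto simp: power_0_left\<close>)
  also have "\<dots> = 1" using n1 by (simp add: sum.delta)
  finally have G0: "G \<noteq> 0" by auto
  have dG: "degree G \<le> (Q - 1) * (n - 1)" unfolding G_def
  proof (rule degree_sum_le)
    fix i assume "i \<in> {..<n}"
    then have "i \<le> n - 1" by simp
    then have "(Q - 1) * i \<le> (Q - 1) * (n - 1)" by (rule mult_le_mono2)
    then show "degree (monom (1::'F) ((Q - 1) * i)) \<le> (Q - 1) * (n - 1)"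
      using degree_monom_le[of "1::'F" "(Q - 1) * i"] by linarith
  qed simp
  have "(Q - 1) * (n - 1) = Q ^ t - Q" using nQ QtQ n1 Q
    by (simp add: diff_mult_distrib2)
  with dG have dG': "degree G \<le> Q ^ t - Q" by simp
  have sub: "UNIV - {x::'F. x ^ Q = x} \<subseteq> {x. poly G x = 0}"
  proof
    fix x :: 'F assume "x \<in> UNIV - {x. x ^ Q = x}"
    then have nx: "x ^ Q - x \<noteq> 0" by auto
    define y where "y = x ^ (Q - 1)"
    have QS: "Q = Suc (Q - 1)" using Q by simp
    have xQ: "x ^ Q = x * y" unfolding y_def by (subst QS) (simp only: power_Suc)
    have "x ^ (Q ^ t) = x" using fermat_field[of x] cardF by simp
    moreover have "Q ^ t = Suc ((Q - 1) * n)" using nQ Qt1 by simp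
    then have "x ^ (Q ^ t) = x * y ^ n" unfolding y_def by (simp add: power_mult)
    ultimately have xy: "x * y ^ n = x" by simp
    have "(x ^ Q - x) * poly G x = (x * y - x) * (\<Sum>i<n. y ^ i)"
      unfolding pG xQ y_def by (simp add: power_mult)
    also have "\<dots> = x * ((y - 1) * (\<Sum>i<n. y ^ i))" by (simp add: algebra_simps)
    also have "\<dots> = x * (y ^ n - 1)" by (simp add: power_diff_1_eq)
    also have "\<dots> = 0" using xy by (simp add: algebra_simps)
    finally show "x \<in> {x. poly G x = 0}" using nx by simp
  qed
  have "card (UNIV - {x::'F. x ^ Q = x}) \<le> card {x. poly G x = 0}"
    by (rule card_mono[OF _ sub]) (simp add: poly_roots_finite[OF G0])
  also have "\<dots> \<le> Q ^ t - Q" using card_poly_roots_bound[OF G0] dG' by simp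
  finally have "card (UNIV::'F set) - card {x::'F. x ^ Q = x} \<le> Q ^ t - Q"
    by (simp add: card_Diff_subset)
  then show ?thesis using cardF QtQ by linarith
qed

lemma greedy_indep:
  fixes E Z :: "'F::{field,finite} set"
  assumes clos: "\<forall>x\<in>E. \<forall>y\<in>E. - x / y \<in> E"
  shows "(\<forall>k'<k. card E ^ k' < card Z) \<Longrightarrow>
    \<exists>w. (\<forall>t<k. w t \<in> Z) \<and> (\<forall>e. (\<forall>t<k. e t \<in> E) \<and> (\<Sum>t<k. e t * w t) = 0 \<longrightarrow> (\<forall>t<k. e t = 0))"
proof (induction k)
  case 0
  then show ?case by auto
next
  case (Suc k)
  have pk: "\<forall>k'<k. card E ^ k' < card Z" using Suc.prems by simp
  obtain w where wZ: "\<forall>t<k. w t \<in> Z"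
    and wi: "\<forall>e. (\<forall>t<k. e t \<in> E) \<and> (\<Sum>t<k. e t * w t) = 0 \<longrightarrow> (\<forall>t<k. e t = 0)"
    using Suc.IH[OF pk] by blast
  define span where "span = (\<lambda>e. \<Sum>t<k. e t * w t) ` fset_on {..<k} E 0"
  have "card span \<le> card (fset_on {..<k} E 0)" unfolding span_def
    by (rule card_image_le) (simp add: finite_fset_on)
  also have "\<dots> = card E ^ k" by (simp add: card_fset_on)
  also have "\<dots> < card Z" using Suc.prems by simp
  finally have lt: "card span < card Z" .
  have fsp: "finite span" by simp
  from lt have "\<not> Z \<subseteq> span" using card_mono[OF fsp, of Z] by linarith
  then obtain z where zZ: "z \<in> Z" and zn: "z \<notin> span" by auto
  define w' where "w' = w(k := z)"
  show ?case
  proof (intro exI[of _ w'] conjI allI impI)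
    fix t assume "t < Suc k" then show "w' t \<in> Z" using wZ zZ by (auto simp: w'_def less_Suc_eq)
  next
    fix e t assume H: "(\<forall>t<Suc k. e t \<in> E) \<and> (\<Sum>t<Suc k. e t * w' t) = 0" and t: "t < Suc k"
    have sw: "(\<Sum>t<k. e t * w' t) = (\<Sum>t<k. e t * w t)"
      by (rule sum.cong) (auto simp: w'_def)
    have eq: "(\<Sum>t<k. e t * w t) + e k * z = 0" using H sw by (simp add: w'_def)
    have ek: "e k = 0"
    proof (rule ccontr)
      assume ek: "e k \<noteq> 0"
      define c where "c t = (if t < k then - e t / e k else 0)" for t
      have cin: "c \<in> fset_on {..<k} E 0"
      proof -
        have "\<forall>t<k. - e t / e k \<in> E" using H clos by simp
        then show ?thesis unfolding fset_on_def c_def by simp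
      qed
      have "(\<Sum>t<k. c t * w t) = (\<Sum>t<k. - (e t * w t) / e k)"
        by (rule sum.cong) (auto simp: c_def)
      also have "\<dots> = - (\<Sum>t<k. e t * w t) / e k" by (simp add: sum_divide_distrib sum_negf)
      also have "\<dots> = z"
      proof -
        have ekz: "e k * z = - (\<Sum>t<k. e t * w t)" using eq by (simp add: eq_neg_iff_add_eq_0 add.commute)
        have "- (\<Sum>t<k. e t * w t) / e k = (e k * z) / e k" by (simp only: ekz)
        also have "\<dots> = z" using ek by simp
        finally show ?thesis .
      qed
      finally have zc: "z = (\<lambda>e. \<Sum>t<k. e t * w t) c" by simp
      have "z \<in> span" unfolding span_def by (rule image_eqI[where f="\<lambda>e. \<Sum>t<k. e t * w t", OF zc cin])
      then show False using zn by simp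
    qed
    then have "(\<Sum>t<k. e t * w t) = 0" using eq by simp
    moreover have "\<forall>t<k. e t \<in> E" using H by simp
    ultimately have "\<forall>t<k. e t = 0" using wi[rule_format, of e] by blast
    then show "e t = 0" using ek t by (auto simp: less_Suc_eq)
  qed
qed

lemma frob_sum:
  fixes f :: "'x \<Rightarrow> 'F::field"
  assumes addQ: "\<And>x y::'F. (x + y) ^ Q = x ^ Q + y ^ Q" and Q0: "Q > 0"
  shows "(sum f A) ^ Q = (\<Sum>a\<in>A. f a ^ Q)"
proof (induction A rule: infinite_finite_induct)
  case (infinite A) then show ?case using Q0 by simp
next
  case empty then show ?case using Q0 by simp
next
  case (insert a A) then show ?case by (simp add: addQ)
qed

lemma frob_neg:
  fixes x :: "'F::field"
  assumes addQ: "\<And>x y::'F. (x + y) ^ Q = x ^ Q + y ^ Q" and Q0: "Q > 0"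
  shows "(- x) ^ Q = - (x ^ Q)"
proof -
  have "0 = (x + - x) ^ Q" using Q0 by simp
  also have "\<dots> = x ^ Q + (- x) ^ Q" by (rule addQ)
  finally show ?thesis by (simp add: eq_neg_iff_add_eq_0 add.commute)
qed

lemma frob_diff:
  fixes x y :: "'F::field"
  assumes addQ: "\<And>x y::'F. (x + y) ^ Q = x ^ Q + y ^ Q" and Q0: "Q > 0"
  shows "(x - y) ^ Q = x ^ Q - y ^ Q"
  using addQ[of x "- y"] frob_neg[OF addQ Q0, of y] by simp

lemma sum_remove0:
  assumes "finite J" "j0 \<in> J" "f j0 = 0"
  shows "sum f J = sum f (J - {j0})"
  using assms by (simp add: sum.remove)

lemma moore:
  fixes B :: "nat \<Rightarrow> nat \<Rightarrow> 'F::{field,finite}" and Q :: nat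
  assumes addQ: "\<And>x y::'F. (x + y) ^ Q = x ^ Q + y ^ Q" and Q0: "Q > 0"
  shows "\<And>J (\<gamma>::nat \<Rightarrow> 'F) x. finite J \<Longrightarrow> (\<forall>i<R. \<forall>j\<in>J. B i j ^ Q = B i j) \<Longrightarrow>
     (\<forall>c. (\<forall>j. c j ^ Q = c j) \<and> c \<in> fs J \<and> (\<forall>i<R. (\<Sum>j\<in>J. c j * B i j) = 0)
          \<and> (\<Sum>j\<in>J. c j * \<gamma> j) = 0 \<longrightarrow> (\<forall>j\<in>J. c j = 0)) \<Longrightarrow>
     card {x \<in> fs J. \<forall>i<R. (\<Sum>j\<in>J. x j * B i j) = 0} \<le> card (UNIV::'F set) ^ h \<Longrightarrow>
     x \<in> fs J \<Longrightarrow> (\<forall>i<R. (\<Sum>j\<in>J. x j * B i j) = 0) \<Longrightarrow>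
     (\<forall>s<h. (\<Sum>j\<in>J. x j * \<gamma> j ^ (Q ^ s)) = 0) \<Longrightarrow> \<forall>j\<in>J. x j = 0"
proof (induction h)
  case (0 J \<gamma> x)
  show ?case
  proof (rule ccontr)
    assume "\<not> (\<forall>j\<in>J. x j = 0)"
    then obtain j0 where "j0 \<in> J" "x j0 \<noteq> 0" by auto
    then have x0: "x \<noteq> (\<lambda>_. 0)" by auto
    let ?K = "{x \<in> fs J. \<forall>i<R. (\<Sum>j\<in>J. x j * B i j) = 0}"
    have "{(\<lambda>_. 0), x} \<subseteq> ?K" using "0.prems" by (auto simp: fs_iff)
    moreover have "finite ?K" by (rule finite_subset[OF _ finite_fs[OF "0.prems"(1)]]) auto
    ultimately have "card {(\<lambda>_. 0), x} \<le> card ?K" by (rule card_mono[rotated])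
    then have "2 \<le> card ?K" using x0 by simp
    then show False using "0.prems"(4) by simp
  qed
next
  case (Suc h J \<gamma> x)
  note finJ = Suc.prems(1) and Bk = Suc.prems(2) and inj = Suc.prems(3) and cardK = Suc.prems(4)
    and xfs = Suc.prems(5) and xB = Suc.prems(6) and xG = Suc.prems(7)
  show ?case
  proof (rule ccontr)
    assume "\<not> (\<forall>j\<in>J. x j = 0)"
    then obtain j0 where j0: "j0 \<in> J" and xj0: "x j0 \<noteq> 0" by auto
    define y where "y j = x j / x j0" for j
    have yfs: "y \<in> fs J" using xfs by (auto simp: fs_iff y_def)
    have yj0: "y j0 = 1" using xj0 by (simp add: y_def)
    have yB: "\<forall>i<R. (\<Sum>j\<in>J. y j * B i j) = 0"
    proof (intro allI impI)
      fix i assume "i < R"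
      have "(\<Sum>j\<in>J. y j * B i j) = (\<Sum>j\<in>J. x j * B i j) / x j0"
        by (simp add: y_def sum_divide_distrib)
      then show "(\<Sum>j\<in>J. y j * B i j) = 0" using xB \<open>i < R\<close> by simp
    qed
    have yG: "\<forall>s<Suc h. (\<Sum>j\<in>J. y j * \<gamma> j ^ (Q ^ s)) = 0"
    proof (intro allI impI)
      fix s assume "s < Suc h"
      have "(\<Sum>j\<in>J. y j * \<gamma> j ^ (Q ^ s)) = (\<Sum>j\<in>J. x j * \<gamma> j ^ (Q ^ s)) / x j0"
        by (simp add: y_def sum_divide_distrib)
      then show "(\<Sum>j\<in>J. y j * \<gamma> j ^ (Q ^ s)) = 0" using xG \<open>s < Suc h\<close> by simp
    qed
    define y' where "y' j = y j - y j ^ Q" for j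
    define J' where "J' = J - {j0}"
    define \<gamma>' where "\<gamma>' j = \<gamma> j ^ Q" for j
    have finJ': "finite J'" using finJ by (simp add: J'_def)
    have y'j0: "y' j0 = 0" using yj0 by (simp add: y'_def)
    have y'fs: "y' \<in> fs J'"
      unfolding fs_iff
    proof (intro allI impI)
      fix j assume "j \<notin> J'"
      then have "j = j0 \<or> j \<notin> J" by (auto simp: J'_def)
      then show "y' j = 0"
      proof
        assume "j \<notin> J" then have "y j = 0" using yfs by (simp add: fs_iff)
        then show ?thesis using Q0 by (simp add: y'_def)
      qed (simp add: y'j0)
    qed
    have y'B: "\<forall>i<R. (\<Sum>j\<in>J'. y' j * B i j) = 0"
    proof (intro allI impI)
      fix i assume i: "i < R"
      have "(\<Sum>j\<in>J'. y' j * B i j) = (\<Sum>j\<in>J. y' j * B i j)"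
        unfolding J'_def by (rule sum_remove0[symmetric]) (use finJ j0 y'j0 in auto)
      also have "\<dots> = (\<Sum>j\<in>J. y j * B i j - (y j * B i j) ^ Q)"
      proof (rule sum.cong)
        fix j assume "j \<in> J"
        then have "B i j ^ Q = B i j" using Bk i by simp
        then show "y' j * B i j = y j * B i j - (y j * B i j) ^ Q"
          by (simp add: y'_def power_mult_distrib algebra_simps)
      qed simp
      also have "\<dots> = (\<Sum>j\<in>J. y j * B i j) - (\<Sum>j\<in>J. y j * B i j) ^ Q"
        by (simp add: sum_subtractf frob_sum[OF addQ Q0])
      also have "\<dots> = 0" using yB i Q0 by simp
      finally show "(\<Sum>j\<in>J'. y' j * B i j) = 0" .
    qed
    have y'G: "\<forall>s<h. (\<Sum>j\<in>J'. y' j * \<gamma>' j ^ (Q ^ s)) = 0"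
    proof (intro allI impI)
      fix s assume s: "s < h"
      have pw: "\<gamma>' j ^ (Q ^ s) = \<gamma> j ^ (Q ^ Suc s)" for j
        by (simp add: \<gamma>'_def power_mult[symmetric] mult.commute)
      have pw2: "(y j * \<gamma> j ^ (Q ^ s)) ^ Q = y j ^ Q * \<gamma> j ^ (Q ^ Suc s)" for j
        by (simp add: power_mult_distrib power_mult[symmetric] mult.commute)
      have "(\<Sum>j\<in>J'. y' j * \<gamma>' j ^ (Q ^ s)) = (\<Sum>j\<in>J. y' j * \<gamma>' j ^ (Q ^ s))"
        unfolding J'_def by (rule sum_remove0[symmetric]) (use finJ j0 y'j0 in auto)
      also have "\<dots> = (\<Sum>j\<in>J. y j * \<gamma> j ^ (Q ^ Suc s) - (y j * \<gamma> j ^ (Q ^ s)) ^ Q)"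
        by (rule sum.cong) (simp_all only: pw pw2 y'_def left_diff_distrib)
      also have "\<dots> = (\<Sum>j\<in>J. y j * \<gamma> j ^ (Q ^ Suc s)) - (\<Sum>j\<in>J. y j * \<gamma> j ^ (Q ^ s)) ^ Q"
        by (simp add: sum_subtractf frob_sum[OF addQ Q0])
      also have "\<dots> = 0"
      proof -
        have a1: "(\<Sum>j\<in>J. y j * \<gamma> j ^ (Q ^ Suc s)) = 0" using yG s by blast
        have a2: "(\<Sum>j\<in>J. y j * \<gamma> j ^ (Q ^ s)) = 0" using yG s by simp
        show ?thesis unfolding a1 a2 using Q0 by simp
      qed
      finally show "(\<Sum>j\<in>J'. y' j * \<gamma>' j ^ (Q ^ s)) = 0" .
    qed
    have BkJ': "\<forall>i<R. \<forall>j\<in>J'. B i j ^ Q = B i j" using Bk by (auto simp: J'_def)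
    have injJ': "\<forall>c. (\<forall>j. c j ^ Q = c j) \<and> c \<in> fs J' \<and> (\<forall>i<R. (\<Sum>j\<in>J'. c j * B i j) = 0)
          \<and> (\<Sum>j\<in>J'. c j * \<gamma>' j) = 0 \<longrightarrow> (\<forall>j\<in>J'. c j = 0)"
    proof (intro allI impI)
      fix c assume H: "(\<forall>j. c j ^ Q = c j) \<and> c \<in> fs J' \<and> (\<forall>i<R. (\<Sum>j\<in>J'. c j * B i j) = 0)
          \<and> (\<Sum>j\<in>J'. c j * \<gamma>' j) = 0"
      have cj0: "c j0 = 0" using H by (simp add: fs_iff J'_def)
      have cfs: "c \<in> fs J" using H by (auto simp: fs_iff J'_def)
      have sJ: "(\<Sum>j\<in>J. f j) = (\<Sum>j\<in>J'. f j)" if "f j0 = 0" for f :: "nat \<Rightarrow> 'F"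
        unfolding J'_def by (rule sum_remove0) (use finJ j0 that in auto)
      have cB: "\<forall>i<R. (\<Sum>j\<in>J. c j * B i j) = 0" using H sJ[of "\<lambda>j. c j * B _ j"] cj0 by simp
      have "(\<Sum>j\<in>J. c j * \<gamma> j) ^ Q = (\<Sum>j\<in>J. c j ^ Q * \<gamma> j ^ Q)"
        by (simp add: frob_sum[OF addQ Q0] power_mult_distrib)
      also have "\<dots> = (\<Sum>j\<in>J. c j * \<gamma>' j)" using H by (simp add: \<gamma>'_def)
      also have "\<dots> = (\<Sum>j\<in>J'. c j * \<gamma>' j)" using sJ[of "\<lambda>j. c j * \<gamma>' j"] cj0 by simp
      also have "\<dots> = 0" using H by simp
      finally have "(\<Sum>j\<in>J. c j * \<gamma> j) = 0" by simp
      then have "\<forall>j\<in>J. c j = 0" using inj[rule_format, of c] H cfs cB by blast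
      then show "\<forall>j\<in>J'. c j = 0" by (auto simp: J'_def)
    qed
    let ?K = "{x \<in> fs J. \<forall>i<R. (\<Sum>j\<in>J. x j * B i j) = 0}"
    let ?K' = "{x \<in> fs J'. \<forall>i<R. (\<Sum>j\<in>J'. x j * B i j) = 0}"
    define \<phi> where "\<phi> p = (\<lambda>j. snd p j + fst p * y j)" for p :: "'F \<times> (nat \<Rightarrow> 'F)"
    have injphi: "inj_on \<phi> (UNIV \<times> ?K')"
    proof (rule inj_onI)
      fix p p' assume p: "p \<in> UNIV \<times> ?K'" and p': "p' \<in> UNIV \<times> ?K'" and e: "\<phi> p = \<phi> p'"
      have z0: "snd p j0 = 0" "snd p' j0 = 0" using p p' by (auto simp: fs_iff J'_def)
      have "\<phi> p j0 = \<phi> p' j0" using e by simp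
      then have t: "fst p = fst p'" using z0 yj0 by (simp add: \<phi>_def)
      have "snd p = snd p'"
      proof
        fix j have "\<phi> p j = \<phi> p' j" using e by simp
        then show "snd p j = snd p' j" using t by (simp add: \<phi>_def)
      qed
      then show "p = p'" using t by (simp add: prod_eq_iff)
    qed
    have imphi: "\<phi> ` (UNIV \<times> ?K') \<subseteq> ?K"
    proof
      fix v assume "v \<in> \<phi> ` (UNIV \<times> ?K')"
      then obtain t z where z: "z \<in> ?K'" and v: "v = \<phi> (t, z)" by auto
      have zj0: "z j0 = 0" using z by (simp add: fs_iff J'_def)
      have "v \<in> fs J" using z yfs by (auto simp: fs_iff v \<phi>_def J'_def)
      moreover have "\<forall>i<R. (\<Sum>j\<in>J. v j * B i j) = 0"
      proof (intro allI impI)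
        fix i assume i: "i < R"
        have "(\<Sum>j\<in>J. v j * B i j) = (\<Sum>j\<in>J. z j * B i j) + t * (\<Sum>j\<in>J. y j * B i j)"
          by (simp add: v \<phi>_def algebra_simps sum.distrib sum_distrib_left)
        also have "(\<Sum>j\<in>J. z j * B i j) = (\<Sum>j\<in>J'. z j * B i j)"
          unfolding J'_def by (rule sum_remove0) (use finJ j0 zj0 in auto)
        finally show "(\<Sum>j\<in>J. v j * B i j) = 0" using z yB i by simp
      qed
      ultimately show "v \<in> ?K" by simp
    qed
    have "card (UNIV::'F set) * card ?K' = card ((UNIV::'F set) \<times> ?K')" by (simp add: card_cartesian_product)
    also have "\<dots> \<le> card ?K"
      by (rule card_inj_on_le[OF injphi imphi]) (rule finite_subset[OF _ finite_fs[OF finJ]], auto)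
    also have "\<dots> \<le> card (UNIV::'F set) ^ Suc h" using cardK .
    finally have "card (UNIV::'F set) * card ?K' \<le> card (UNIV::'F set) * card (UNIV::'F set) ^ h" by simp
    moreover have "0 < card (UNIV::'F set)" by (rule finite_UNIV_card_ge_0) simp
    ultimately have cardK': "card ?K' \<le> card (UNIV::'F set) ^ h" by simp
    have "\<forall>j\<in>J'. y' j = 0"
      by (rule Suc.IH[OF finJ' BkJ' injJ' cardK' y'fs y'B y'G])
    then have yK: "\<forall>j. y j ^ Q = y j"
    proof (intro allI)
      fix j assume A: "\<forall>j\<in>J'. y' j = 0"
      show "y j ^ Q = y j"
      proof (cases "j \<in> J'")
        case True then show ?thesis using A by (simp add: y'_def)
      next
        case False
        then have "j = j0 \<or> j \<notin> J" by (auto simp: J'_def)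
        then show ?thesis
        proof
          assume "j \<notin> J" then have "y j = 0" using yfs by (simp add: fs_iff)
          then show ?thesis using Q0 by simp
        qed (simp add: yj0)
      qed
    qed
    have "(\<Sum>j\<in>J. y j * \<gamma> j) = 0" using yG by auto
    then have "\<forall>j\<in>J. y j = 0" using inj[rule_format, of y] yK yfs yB by blast
    then show False using j0 yj0 by simp
  qed
qed

definition Hmat :: "nat \<Rightarrow> nat \<Rightarrow> nat \<Rightarrow> nat \<Rightarrow> (nat \<Rightarrow> 'F::field option) \<Rightarrow> (nat \<Rightarrow> 'F) \<Rightarrow> nat \<Rightarrow> nat \<Rightarrow> 'F" where
  "Hmat q g r a pt \<beta> i j = (if i < g * a then (if j div r = i div a then colv a (pt (j mod r)) (i mod a) else 0)
     else \<beta> j ^ (q ^ (i - g * a)))"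

lemma div_block_iff:
  fixes j r b :: nat
  assumes "r > 0"
  shows "j \<in> {b * r..<(b + 1) * r} \<longleftrightarrow> j div r = b"
proof
  assume "j \<in> {b * r..<(b + 1) * r}"
  then show "j div r = b" by (intro div_nat_eqI) (auto simp: mult.commute)
next
  assume "j div r = b"
  moreover have "j = j div r * r + j mod r" by simp
  moreover have "j mod r < r" using assms by simp
  ultimately show "j \<in> {b * r..<(b + 1) * r}" by (simp add: algebra_simps)
qed

lemma block_sum:
  fixes c :: "nat \<Rightarrow> 'F::field"
  assumes "finite S" "b < g" "t < a"
  shows "(\<Sum>j\<in>S. c j * Hmat q g r a pt \<beta> (b * a + t) j) = (\<Sum>j\<in>{j\<in>S. j div r = b}. c j * colv a (pt (j mod r)) t)"
proof -
  have a0: "a > 0" using assms by simp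
  have lt: "b * a + t < g * a"
  proof -
    have "b * a + t < b * a + a" using assms by simp
    also have "\<dots> = Suc b * a" by simp
    also have "\<dots> \<le> g * a" using assms by (intro mult_le_mono1) simp
    finally show ?thesis .
  qed
  have dv: "(b * a + t) div a = b" and md: "(b * a + t) mod a = t" using assms a0 by auto
  have "(\<Sum>j\<in>S. c j * Hmat q g r a pt \<beta> (b * a + t) j) = (\<Sum>j\<in>S. if j div r = b then c j * colv a (pt (j mod r)) t else 0)"
    by (rule sum.cong) (use assms(3) in \<open>simp_all add: Hmat_def lt dv md\<close>)
  also have "\<dots> = (\<Sum>j\<in>{j\<in>S. j div r = b}. c j * colv a (pt (j mod r)) t)"
    using assms(1) by (simp add: sum.inter_filter)
  finally show ?thesis .
qed

lemma inj_block:
  fixes pt :: "nat \<Rightarrow> 'a"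
  assumes "r > 0" "inj_on pt {..<r}"
  shows "inj_on (\<lambda>j. pt (j mod r)) {j. j div r = b}"
proof (rule inj_onI)
  fix x y assume x: "x \<in> {j. j div r = b}" and y: "y \<in> {j. j div r = b}" and e: "pt (x mod r) = pt (y mod r)"
  have "x mod r = y mod r" using e assms by (simp add: inj_on_def)
  moreover have "x div r = y div r" using x y by simp
  moreover have "x = x div r * r + x mod r" "y = y div r * r + y mod r" by simp_all
  ultimately show "x = y" by simp
qed

lemma block_zero:
  fixes d :: "nat \<Rightarrow> 'F::field"
  assumes r0: "r > 0" and inj: "inj_on pt {..<r}" and finS: "finite S" and b: "b < g"
    and eqs: "\<forall>t<a. (\<Sum>j\<in>S. d j * Hmat q g r a pt \<beta> (b * a + t) j) = 0"
    and T: "T \<subseteq> {j\<in>S. j div r = b}" and cT: "card T \<le> a"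
    and z: "\<forall>j\<in>{j\<in>S. j div r = b} - T. d j = 0"
  shows "\<forall>j\<in>T. d j = 0"
proof -
  have finT: "finite T" by (rule finite_subset[OF T]) (simp add: finS)
  have "\<forall>t<a. (\<Sum>j\<in>T. d j * colv a (pt (j mod r)) t) = 0"
  proof (intro allI impI)
    fix t assume t: "t < a"
    have "(\<Sum>j\<in>T. d j * colv a (pt (j mod r)) t) = (\<Sum>j\<in>{j\<in>S. j div r = b}. d j * colv a (pt (j mod r)) t)"
      by (rule sum.mono_neutral_left) (use finS T z in auto)
    also have "\<dots> = (\<Sum>j\<in>S. d j * Hmat q g r a pt \<beta> (b * a + t) j)"
      by (rule block_sum[symmetric]) (use finS b t in auto)
    also have "\<dots> = 0" using eqs t by simp
    finally show "(\<Sum>j\<in>T. d j * colv a (pt (j mod r)) t) = 0" .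
  qed
  moreover have "inj_on (\<lambda>j. pt (j mod r)) T"
    by (rule inj_on_subset[OF inj_block[OF r0 inj, of b]]) (use T in auto)
  ultimately show ?thesis using gvand_indep[OF finT _ cT, of "\<lambda>j. pt (j mod r)" d] by blast
qed

definition betaf :: "nat \<Rightarrow> nat \<Rightarrow> nat \<Rightarrow> (nat \<Rightarrow> 'F::field option) \<Rightarrow> (nat \<Rightarrow> 'F) \<Rightarrow> (nat \<Rightarrow> 'F) \<Rightarrow> (nat \<Rightarrow> 'F) \<Rightarrow> nat \<Rightarrow> 'F" where
  "betaf r k0 s0 pt \<omega> \<theta> \<xi> j = (\<Sum>s<s0. \<xi> (j div r) ^ s * \<theta> s) * (\<Sum>t<k0. colv k0 (pt (j mod r)) t * \<omega> t)"

lemma lt_ba: "b < g \<Longrightarrow> t < a \<Longrightarrow> b * a + t < g * (a::nat)"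
proof -
  assume "b < g" "t < a"
  then have "b * a + t < b * a + a" by simp
  also have "\<dots> = Suc b * a" by simp
  also have "\<dots> \<le> g * a" using \<open>b < g\<close> by (intro mult_le_mono1) simp
  finally show ?thesis .
qed

context
  fixes q Q2 a r g h k0 s0 :: nat
    and pt :: "nat \<Rightarrow> 'F::{field,finite} option"
    and \<omega> \<theta> \<xi> :: "nat \<Rightarrow> 'F"
  assumes addq: "\<And>x y::'F. (x + y) ^ q = x ^ q + y ^ q" and q0: "q > 0"
    and addQ2: "\<And>x y::'F. (x + y) ^ Q2 = x ^ Q2 + y ^ Q2" and Q20: "Q2 > 0"
    and KL: "\<And>x::'F. x ^ q = x \<Longrightarrow> x ^ Q2 = x"
    and ptK: "\<forall>k v. pt k = Some v \<longrightarrow> v ^ q = v"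
    and ptinj: "inj_on pt {..<r}"
    and \<omega>L: "\<forall>t<k0. \<omega> t ^ Q2 = \<omega> t"
    and \<omega>ind: "\<forall>e. (\<forall>t<k0. e t ^ q = e t) \<and> (\<Sum>t<k0. e t * \<omega> t) = 0 \<longrightarrow> (\<forall>t<k0. e t = 0)"
    and \<theta>ind: "\<forall>e. (\<forall>t<s0. e t ^ Q2 = e t) \<and> (\<Sum>t<s0. e t * \<theta> t) = 0 \<longrightarrow> (\<forall>t<s0. e t = 0)"
    and \<xi>L: "\<forall>b. \<xi> b ^ Q2 = \<xi> b" and \<xi>inj: "inj_on \<xi> {..<g}"
    and k0: "k0 = min r (a + h)" and s0: "s0 = min h g"
    and a0: "a > 0" and r0: "r > 0"
begin

lemma colv_K: "colv k (pt j) t ^ q = colv k (pt j) t"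
proof (cases "pt j")
  case None then show ?thesis using q0 by (simp add: colv_def)
next
  case (Some v)
  then have "v ^ q = v" using ptK by simp
  then have "(v ^ t) ^ q = v ^ t" by (metis power_mult mult.commute)
  then show ?thesis using Some by (simp add: colv_def)
qed

lemma H_K: "i < g * a \<Longrightarrow> Hmat q g r a pt \<beta> i j ^ q = Hmat q g r a pt \<beta> i j"
  using colv_K q0 by (simp add: Hmat_def)

lemma MR:
  assumes Ssub: "S \<subseteq> {..<g * r}" and cS: "card S = g * a + h"
    and Sblk: "\<forall>b<g. a \<le> card (S \<inter> {b * r..<(b + 1) * r})"
  shows "cols_indep (Hmat q g r a pt (betaf r k0 s0 pt \<omega> \<theta> \<xi>)) (g * a + h) S"
proof -
  define \<beta> where "\<beta> = betaf r k0 s0 pt \<omega> \<theta> \<xi>"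
  define H where "H = Hmat q g r a pt \<beta>"
  have finS: "finite S" using Ssub finite_subset by blast
  define Sb where "Sb b = {j\<in>S. j div r = b}" for b
  have Sb_eq: "S \<inter> {b * r..<(b + 1) * r} = Sb b" for b
    using div_block_iff[OF r0, of _ b] unfolding Sb_def by blast
  have cSb: "\<forall>b<g. a \<le> card (Sb b)" using Sblk Sb_eq by simp
  have finSb: "finite (Sb b)" for b using finS by (simp add: Sb_def)
  have divS: "j div r < g" if "j \<in> S" for j
  proof -
    have "j < g * r" using Ssub that by auto
    then show ?thesis by (simp add: less_mult_imp_div_less)
  qed
  have sumcard: "(\<Sum>b<g. card (Sb b)) = card S"
  proof -
    have "(\<Sum>b\<in>{..<g}. \<Sum>j\<in>{x\<in>S. x div r = b}. (1::nat)) = (\<Sum>j\<in>S. 1)"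
      by (rule sum.group) (use finS divS in auto)
    then show ?thesis by (simp add: Sb_def)
  qed
  have exc: "(\<Sum>b<g. card (Sb b) - a) = h"
  proof -
    have "(\<Sum>b<g. card (Sb b) - a) = (\<Sum>b<g. card (Sb b)) - (\<Sum>b<g. a)"
      by (rule sum_subtractf_nat) (use cSb in auto)
    then show ?thesis using sumcard cS by simp
  qed
  have bnd1: "card (Sb b) \<le> a + h" if "b < g" for b
  proof -
    have "card (Sb b) - a \<le> (\<Sum>b<g. card (Sb b) - a)"
      by (rule member_le_sum) (use that in auto)
    then show ?thesis using exc by simp
  qed
  have bnd2: "card (Sb b) \<le> r" for b
  proof -
    have "Sb b \<subseteq> {b * r..<(b + 1) * r}" using Sb_eq by blast
    then have "card (Sb b) \<le> card {b * r..<(b + 1) * r}" by (rule card_mono[rotated]) simp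
    then show ?thesis by simp
  qed
  define I where "I = {b\<in>{..<g}. a < card (Sb b)}"
  have cI: "card I \<le> s0"
  proof -
    have "card I = (\<Sum>b\<in>I. 1)" by simp
    also have "\<dots> \<le> (\<Sum>b\<in>I. card (Sb b) - a)" by (rule sum_mono) (auto simp: I_def)
    also have "\<dots> \<le> (\<Sum>b<g. card (Sb b) - a)" by (rule sum_mono2) (auto simp: I_def)
    finally have "card I \<le> h" using exc by simp
    moreover have "card I \<le> g"
      using card_mono[of "{..<g}" I] by (auto simp: I_def)
    ultimately show ?thesis using s0 by simp
  qed
  have Hbeta: "H (g * a + s) j = \<beta> j ^ (q ^ s)" for s j by (simp add: H_def Hmat_def)
  have injK: "\<forall>e. (\<forall>j. e j ^ q = e j) \<and> e \<in> fs S \<and> (\<forall>i<g * a. (\<Sum>j\<in>S. e j * H i j) = 0)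
          \<and> (\<Sum>j\<in>S. e j * \<beta> j) = 0 \<longrightarrow> (\<forall>j\<in>S. e j = 0)"
  proof (intro allI impI)
    fix e assume E: "(\<forall>j. e j ^ q = e j) \<and> e \<in> fs S \<and> (\<forall>i<g * a. (\<Sum>j\<in>S. e j * H i j) = 0)
          \<and> (\<Sum>j\<in>S. e j * \<beta> j) = 0"
    have eK: "\<forall>j. e j ^ q = e j" using E by simp
    have blk: "\<forall>t<a. (\<Sum>j\<in>S. e j * H (b * a + t) j) = 0" if "b < g" for b
      using E lt_ba[OF that] by simp
    have small: "\<forall>j\<in>Sb b. e j = 0" if "b < g" "card (Sb b) \<le> a" for b
      by (rule block_zero[OF r0 ptinj finS that(1) blk[OF that(1), unfolded H_def]])
         (use that in \<open>auto simp: Sb_def\<close>)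
    define P where "P j = (\<Sum>t<k0. colv k0 (pt (j mod r)) t * \<omega> t)" for j
    define lam where "lam b = (\<Sum>s<s0. \<xi> b ^ s * \<theta> s)" for b
    define \<mu> where "\<mu> b = (\<Sum>j\<in>Sb b. e j * P j)" for b
    have "(\<Sum>j\<in>S. e j * \<beta> j) = (\<Sum>b\<in>{..<g}. \<Sum>j\<in>{x\<in>S. x div r = b}. e j * \<beta> j)"
      by (rule sum.group[symmetric]) (use finS divS in auto)
    also have "\<dots> = (\<Sum>b<g. lam b * \<mu> b)"
    proof (rule sum.cong)
      fix b assume "b \<in> {..<g}"
      have "(\<Sum>j\<in>{x\<in>S. x div r = b}. e j * \<beta> j) = (\<Sum>j\<in>Sb b. lam b * (e j * P j))"
        by (rule sum.cong) (auto simp: Sb_def \<beta>_def betaf_def lam_def P_def)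
      then show "(\<Sum>j\<in>{x\<in>S. x div r = b}. e j * \<beta> j) = lam b * \<mu> b"
        by (simp add: \<mu>_def sum_distrib_left)
    qed simp
    also have "\<dots> = (\<Sum>b\<in>I. lam b * \<mu> b)"
    proof (rule sum.mono_neutral_right)
      show "\<forall>b\<in>{..<g} - I. lam b * \<mu> b = 0"
      proof
        fix b assume "b \<in> {..<g} - I"
        then have "b < g" "card (Sb b) \<le> a" by (auto simp: I_def)
        then have "\<forall>j\<in>Sb b. e j = 0" by (rule small)
        then show "lam b * \<mu> b = 0" by (simp add: \<mu>_def)
      qed
    qed (auto simp: I_def)
    also have "\<dots> = (\<Sum>s<s0. (\<Sum>b\<in>I. \<xi> b ^ s * \<mu> b) * \<theta> s)"
    proof -
      have "(\<Sum>b\<in>I. lam b * \<mu> b) = (\<Sum>b\<in>I. \<Sum>s<s0. \<xi> b ^ s * \<mu> b * \<theta> s)"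
        by (simp add: lam_def sum_distrib_right sum_distrib_left mult_ac)
      also have "\<dots> = (\<Sum>s<s0. \<Sum>b\<in>I. \<xi> b ^ s * \<mu> b * \<theta> s)" by (rule sum.swap)
      also have "\<dots> = (\<Sum>s<s0. (\<Sum>b\<in>I. \<xi> b ^ s * \<mu> b) * \<theta> s)" by (simp add: sum_distrib_right)
      finally show ?thesis .
    qed
    finally have eq1: "(\<Sum>s<s0. (\<Sum>b\<in>I. \<xi> b ^ s * \<mu> b) * \<theta> s) = 0" using E by simp
    have eQ2: "e j ^ Q2 = e j" for j using eK KL by simp
    have colvQ2: "colv k (pt j) t ^ Q2 = colv k (pt j) t" for k j t using colv_K KL by simp
    have PQ2: "P j ^ Q2 = P j" for j
      unfolding P_def using \<omega>L colvQ2
      by (simp add: frob_sum[OF addQ2 Q20] power_mult_distrib)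
    have \<mu>Q2: "\<mu> b ^ Q2 = \<mu> b" for b
      unfolding \<mu>_def using eQ2 PQ2
      by (simp add: frob_sum[OF addQ2 Q20] power_mult_distrib)
    have \<xi>pow: "(\<xi> b ^ s) ^ Q2 = \<xi> b ^ s" for b s
      using \<xi>L by (metis power_mult mult.commute)
    have "\<forall>s<s0. (\<Sum>b\<in>I. \<xi> b ^ s * \<mu> b) = 0"
    proof -
      have "\<forall>s<s0. (\<Sum>b\<in>I. \<xi> b ^ s * \<mu> b) ^ Q2 = (\<Sum>b\<in>I. \<xi> b ^ s * \<mu> b)"
        using \<xi>pow \<mu>Q2 by (simp add: frob_sum[OF addQ2 Q20] power_mult_distrib)
      then show ?thesis using \<theta>ind[rule_format, of "\<lambda>s. \<Sum>b\<in>I. \<xi> b ^ s * \<mu> b"] eq1 by blast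
    qed
    then have vq: "\<forall>s<s0. (\<Sum>b\<in>I. \<mu> b * \<xi> b ^ s) = 0" by (simp add: mult.commute)
    have finI: "finite I" by (simp add: I_def)
    have injI: "inj_on \<xi> I" by (rule inj_on_subset[OF \<xi>inj]) (auto simp: I_def)
    have \<mu>I: "\<forall>b\<in>I. \<mu> b = 0"
      using vandermonde_indep[OF finI injI cI vq] by blast
    have \<mu>0: "\<mu> b = 0" if "b < g" for b
    proof (cases "b \<in> I")
      case True then show ?thesis using \<mu>I by simp
    next
      case False
      then have "card (Sb b) \<le> a" using that by (auto simp: I_def)
      then have "\<forall>j\<in>Sb b. e j = 0" using small that by blast
      then show ?thesis by (simp add: \<mu>_def)
    qed
    have blk0: "\<forall>j\<in>Sb b. e j = 0" if b: "b < g" for b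
    proof -
      define co where "co t = (\<Sum>j\<in>Sb b. e j * colv k0 (pt (j mod r)) t)" for t
      have "\<mu> b = (\<Sum>j\<in>Sb b. \<Sum>t<k0. e j * colv k0 (pt (j mod r)) t * \<omega> t)"
        by (simp add: \<mu>_def P_def sum_distrib_left mult_ac)
      also have "\<dots> = (\<Sum>t<k0. \<Sum>j\<in>Sb b. e j * colv k0 (pt (j mod r)) t * \<omega> t)" by (rule sum.swap)
      also have "\<dots> = (\<Sum>t<k0. co t * \<omega> t)" by (simp add: co_def sum_distrib_right)
      finally have "(\<Sum>t<k0. co t * \<omega> t) = 0" using \<mu>0[OF b] by simp
      moreover have "\<forall>t<k0. co t ^ q = co t"
        unfolding co_def using eK colv_K by (simp add: frob_sum[OF addq q0] power_mult_distrib)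
      ultimately have co0: "\<forall>t<k0. co t = 0" using \<omega>ind by blast
      have injb: "inj_on (\<lambda>j. pt (j mod r)) (Sb b)"
        by (rule inj_on_subset[OF inj_block[OF r0 ptinj, of b]]) (auto simp: Sb_def)
      have "card (Sb b) \<le> k0" using bnd1[OF b] bnd2[of b] k0 by simp
      then show ?thesis using gvand_indep[OF finSb injb, of k0 e] co0 by (simp add: co_def)
    qed
    show "\<forall>j\<in>S. e j = 0"
    proof
      fix j assume "j \<in> S"
      then have "j \<in> Sb (j div r)" "j div r < g" using divS by (auto simp: Sb_def)
      then show "e j = 0" using blk0 by blast
    qed
  qed
  let ?K = "{x \<in> fs S. \<forall>i<g * a. (\<Sum>j\<in>S. x j * H i j) = 0}"
  have "\<forall>b\<in>{..<g}. \<exists>T. T \<subseteq> Sb b \<and> card T = a"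
    using cSb by (auto intro: obtain_subset_with_card_n)
  then obtain PP where PP: "\<forall>b\<in>{..<g}. PP b \<subseteq> Sb b \<and> card (PP b) = a"
    by (metis (no_types) bchoice)
  define Pall where "Pall = (\<Union>b\<in>{..<g}. PP b)"
  have PallS: "Pall \<subseteq> S" using PP by (auto simp: Pall_def Sb_def)
  have cPall: "card Pall = g * a"
  proof -
    have "card Pall = (\<Sum>b\<in>{..<g}. card (PP b))"
      unfolding Pall_def
    proof (rule card_UN_disjoint)
      show "\<forall>i\<in>{..<g}. finite (PP i)" using PP finSb by (meson finite_subset)
      show "\<forall>i\<in>{..<g}. \<forall>j\<in>{..<g}. i \<noteq> j \<longrightarrow> PP i \<inter> PP j = {}"
      proof (intro ballI impI)
        fix i j assume "i \<in> {..<g}" "j \<in> {..<g}" "i \<noteq> j"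
        then have "PP i \<subseteq> Sb i" "PP j \<subseteq> Sb j" using PP by auto
        then show "PP i \<inter> PP j = {}" using \<open>i \<noteq> j\<close> by (auto simp: Sb_def)
      qed
    qed simp
    then show ?thesis using PP by simp
  qed
  have cSP: "card (S - Pall) = h" using card_Diff_subset[OF finite_subset[OF PallS finS] PallS] cS cPall by simp
  define \<rho> where "\<rho> x = (\<lambda>j. if j \<in> S - Pall then x j else 0)" for x :: "nat \<Rightarrow> 'F"
  have inj\<rho>: "inj_on \<rho> ?K"
  proof (rule inj_onI)
    fix x x' assume x: "x \<in> ?K" and x': "x' \<in> ?K" and e: "\<rho> x = \<rho> x'"
    define d where "d j = x j - x' j" for j
    have dfs: "d \<in> fs S" using x x' by (auto simp: fs_iff d_def)
    have dSP: "d j = 0" if "j \<in> S - Pall" for j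
    proof -
      have "\<rho> x j = \<rho> x' j" using e by simp
      then show ?thesis using that by (simp add: \<rho>_def d_def)
    qed
    have deq: "\<forall>i<g * a. (\<Sum>j\<in>S. d j * H i j) = 0"
    proof (intro allI impI)
      fix i assume i: "i < g * a"
      have "(\<Sum>j\<in>S. d j * H i j) = (\<Sum>j\<in>S. x j * H i j) - (\<Sum>j\<in>S. x' j * H i j)"
        by (simp add: d_def left_diff_distrib sum_subtractf)
      then show "(\<Sum>j\<in>S. d j * H i j) = 0" using x x' i by simp
    qed
    have dP: "\<forall>j\<in>PP b. d j = 0" if b: "b < g" for b
    proof (rule block_zero[OF r0 ptinj finS b])
      show "\<forall>t<a. (\<Sum>j\<in>S. d j * Hmat q g r a pt \<beta> (b * a + t) j) = 0"
        using deq lt_ba[OF b] by (simp add: H_def)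
      show "PP b \<subseteq> {j \<in> S. j div r = b}" using PP b by (auto simp: Sb_def)
      show "card (PP b) \<le> a" using PP b by simp
      show "\<forall>j\<in>{j \<in> S. j div r = b} - PP b. d j = 0"
      proof
        fix j assume j: "j \<in> {j \<in> S. j div r = b} - PP b"
        have "j \<notin> Pall"
        proof
          assume "j \<in> Pall"
          then obtain b' where b': "b' < g" "j \<in> PP b'" by (auto simp: Pall_def)
          then have "j div r = b'" using PP by (auto simp: Sb_def)
          then have "b' = b" using j by simp
          then show False using j b' by simp
        qed
        then show "d j = 0" using j dSP by simp
      qed
    qed
    show "x = x'"
    proof
      fix j
      show "x j = x' j"
      proof (cases "j \<in> S")
        case False then show ?thesis using x x' by (simp add: fs_iff)
      next
        case True
        show ?thesis
        proof (cases "j \<in> Pall")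
          case True
          then obtain b where "b < g" "j \<in> PP b" by (auto simp: Pall_def)
          then have "d j = 0" using dP by blast
          then show ?thesis by (simp add: d_def)
        next
          case False
          then have "d j = 0" using dSP \<open>j \<in> S\<close> by simp
          then show ?thesis by (simp add: d_def)
        qed
      qed
    qed
  qed
  have im\<rho>: "\<rho> ` ?K \<subseteq> fs (S - Pall)" by (auto simp: fs_iff \<rho>_def)
  have finSP: "finite (S - Pall)" using finS by simp
  have "card ?K = card (\<rho> ` ?K)" using card_image[OF inj\<rho>] by simp
  also have "\<dots> \<le> card (fs (S - Pall) :: (nat \<Rightarrow> 'F) set)"
    by (rule card_mono[OF finite_fs[OF finSP] im\<rho>])
  also have "\<dots> = card (UNIV :: 'F set) ^ h" using card_fs[OF finSP] cSP by simp
  finally have cardK: "card ?K \<le> card (UNIV :: 'F set) ^ h" .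
  show ?thesis
    unfolding cols_indep_def
  proof (intro allI impI)
    fix c assume C: "\<forall>i<g * a + h. (\<Sum>j\<in>S. c j * Hmat q g r a pt (betaf r k0 s0 pt \<omega> \<theta> \<xi>) i j) = 0"
    define x where "x j = (if j \<in> S then c j else 0)" for j
    have sx: "(\<Sum>j\<in>S. x j * f j) = (\<Sum>j\<in>S. c j * f j)" for f :: "nat \<Rightarrow> 'F"
      by (rule sum.cong) (auto simp: x_def)
    have xfs: "x \<in> fs S" by (simp add: fs_iff x_def)
    have xB: "\<forall>i<g * a. (\<Sum>j\<in>S. x j * H i j) = 0"
      using C by (simp add: sx H_def \<beta>_def)
    have xG: "\<forall>s<h. (\<Sum>j\<in>S. x j * \<beta> j ^ (q ^ s)) = 0"
    proof (intro allI impI)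
      fix s assume s: "s < h"
      have "(\<Sum>j\<in>S. x j * \<beta> j ^ (q ^ s)) = (\<Sum>j\<in>S. c j * H (g * a + s) j)"
        by (simp add: sx Hbeta)
      also have "\<dots> = 0" using C s by (simp add: H_def \<beta>_def)
      finally show "(\<Sum>j\<in>S. x j * \<beta> j ^ (q ^ s)) = 0" .
    qed
    have BK: "\<forall>i<g * a. \<forall>j\<in>S. H i j ^ q = H i j" using H_K by (simp add: H_def)
    have "\<forall>j\<in>S. x j = 0"
      by (rule moore[OF addq q0 finS BK injK cardK xfs xB xG])
    then show "\<forall>j\<in>S. c j = 0" by (simp add: x_def)
  qed
qed

end

lemma row_lemma:
  fixes pt :: "nat \<Rightarrow> 'F::{field,finite} option"
  assumes inj: "inj_on pt {..<r}" and T: "T \<subseteq> {..<r}" and cT: "card T = a"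
    and z: "\<forall>j\<in>T. (\<Sum>i<a. c i * colv a (pt j) i) = 0"
  shows "\<forall>i<a. c i = 0"
proof -
  have finT: "finite T" using T finite_subset by blast
  have injT: "inj_on pt T" using inj_on_subset[OF inj T] .
  have indep: "\<forall>x. (\<forall>i\<in>{..<a}. (\<Sum>j\<in>T. x j * colv a (pt j) i) = 0) \<longrightarrow> (\<forall>j\<in>T. x j = 0)"
  proof (intro allI impI)
    fix x assume "\<forall>i\<in>{..<a}. (\<Sum>j\<in>T. x j * colv a (pt j) i) = 0"
    then have "\<forall>t<a. (\<Sum>j\<in>T. x j * colv a (pt j) t) = 0" by simp
    then show "\<forall>j\<in>T. x j = 0" using gvand_indep[OF finT injT, of a x] cT by simp
  qed
  have "\<forall>i\<in>{..<a}. c i = 0"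
    by (rule square_rows_indep[OF _ finT _ indep, of c]) (use cT z in auto)
  then show ?thesis by simp
qed

lemma mds_colv:
  fixes pt :: "nat \<Rightarrow> 'F::{field,finite} option"
  assumes inj: "inj_on pt {..<r}" and a0: "0 < a" and ar: "a < r"
  shows "mds_generator (\<lambda>i j. colv a (pt j) i) a r"
proof -
  define W where "W c = {j. j < r \<and> (\<Sum>i<a. c i * colv a (pt j) i) \<noteq> 0}" for c :: "nat \<Rightarrow> 'F"
  define Z where "Z c = {j. j < r \<and> (\<Sum>i<a. c i * colv a (pt j) i) = 0}" for c :: "nat \<Rightarrow> 'F"
  have WZ: "card (W c) = r - card (Z c)" for c
  proof -
    have "W c = {..<r} - Z c" by (auto simp: W_def Z_def)
    moreover have "Z c \<subseteq> {..<r}" by (auto simp: Z_def)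
    ultimately show ?thesis by (simp add: card_Diff_subset finite_subset)
  qed
  have Zsub: "Z c \<subseteq> {..<r}" for c by (auto simp: Z_def)
  have Zle: "card (Z c) \<le> a - 1" if nz: "\<exists>i<a. c i \<noteq> 0" for c
  proof (rule ccontr)
    assume "\<not> card (Z c) \<le> a - 1"
    then have "a \<le> card (Z c)" by simp
    then obtain T where T: "T \<subseteq> Z c" "card T = a" "finite T" by (rule obtain_subset_with_card_n)
    have TS: "T \<subseteq> {..<r}" using T(1) Zsub[of c] by blast
    have Tz: "\<forall>j\<in>T. (\<Sum>i<a. c i * colv a (pt j) i) = 0" using T(1) by (auto simp: Z_def)
    have "\<forall>i<a. c i = 0" using row_lemma[OF inj TS T(2) Tz] .
    then show False using nz by blast
  qed
  have c1: "\<forall>c. (\<forall>j<r. (\<Sum>i<a. c i * colv a (pt j) i) = 0) \<longrightarrow> (\<forall>i<a. c i = 0)"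
  proof (rule allI, rule impI)
    fix c :: "nat \<Rightarrow> 'F" assume H: "\<forall>j<r. (\<Sum>i<a. c i * colv a (pt j) i) = 0"
    have le: "a \<le> card {..<r}" using ar by simp
    obtain T where T: "T \<subseteq> {..<r}" "card T = a" "finite T"
      by (rule obtain_subset_with_card_n[OF le])
    have Tz: "\<forall>j\<in>T. (\<Sum>i<a. c i * colv a (pt j) i) = 0" using T H by auto
    show "\<forall>i<a. c i = 0" using row_lemma[OF inj T(1) T(2) Tz] .
  qed
  have le0: "a - 1 \<le> card {..<r}" using ar by simp
  obtain T0 where T0: "T0 \<subseteq> {..<r}" "card T0 = a - 1" "finite T0"
    by (rule obtain_subset_with_card_n[OF le0])
  have finT0: "finite T0" using T0 finite_subset by blast
  have "T0 \<noteq> {..<r}" using T0 ar by auto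
  then obtain j1 where j1: "j1 < r" "j1 \<notin> T0" using T0 by auto
  define T1 where "T1 = insert j1 T0"
  have T1: "T1 \<subseteq> {..<r}" "card T1 = a" using T0 j1 finT0 a0 by (auto simp: T1_def)
  have indep1: "\<forall>x. (\<forall>j\<in>T1. (\<Sum>i\<in>{..<a}. x i * colv a (pt j) i) = 0) \<longrightarrow> (\<forall>i\<in>{..<a}. x i = 0)"
    using row_lemma[OF inj T1] by simp
  obtain c0 where c0: "\<forall>j\<in>T1. (\<Sum>i\<in>{..<a}. c0 i * colv a (pt j) i) = (if j = j1 then 1 else 0)"
  proof -
    have f1: "finite T1" using T1(1) finite_subset by blast
    have c1': "card T1 = card {..<a}" using T1(2) by simp
    show ?thesis using that square_surj[OF f1 finite_lessThan c1' indep1, of "\<lambda>j. if j = j1 then 1 else 0"] by blast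
  qed
  have c0nz: "\<exists>i<a. c0 i \<noteq> 0"
  proof (rule ccontr)
    assume "\<not> (\<exists>i<a. c0 i \<noteq> 0)"
    then have "(\<Sum>i\<in>{..<a}. c0 i * colv a (pt j1) i) = 0" by simp
    then show False using c0 by (simp add: T1_def)
  qed
  have "T0 \<subseteq> Z c0" using c0 T0 j1 by (auto simp: Z_def T1_def)
  then have "card T0 \<le> card (Z c0)" by (rule card_mono[OF finite_subset[OF Zsub finite_lessThan]])
  then have "a - 1 \<le> card (Z c0)" using T0 by simp
  then have "card (Z c0) = a - 1" using Zle[OF c0nz] by simp
  then have Wc0: "card (W c0) = r - a + 1" using WZ[of c0] a0 ar by simp
  define SS where "SS = {card (W c) |c. \<exists>i<a. c i \<noteq> 0}"
  have "Min SS = r - a + 1"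
  proof (rule Min_eqI)
    have "SS \<subseteq> {..r}"
    proof
      fix y assume "y \<in> SS"
      then obtain c where "y = card (W c)" by (auto simp: SS_def)
      then show "y \<in> {..r}" using WZ[of c] by simp
    qed
    then show "finite SS" using finite_subset by blast
    show "r - a + 1 \<le> y" if "y \<in> SS" for y
    proof -
      obtain c where c: "y = card (W c)" "\<exists>i<a. c i \<noteq> 0" using \<open>y \<in> SS\<close> by (auto simp: SS_def)
      then show ?thesis using Zle[OF c(2)] WZ[of c] a0 ar by simp
    qed
    have "r - a + 1 = card (W c0) \<and> (\<exists>i<a. c0 i \<noteq> 0)" using Wc0 c0nz by simp
    then show "r - a + 1 \<in> SS" unfolding SS_def by (intro CollectI exI[of _ c0])
  qed
  then show ?thesis using c1 unfolding mds_generator_def SS_def W_def by simp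
qed

lemma mds_cong:
  assumes "\<forall>i<a. \<forall>j<r. A' i j = A i j"
  shows "mds_generator A' a r = mds_generator A a r"
proof -
  have s: "(\<Sum>i<a. c i * A' i j) = (\<Sum>i<a. c i * A i j)" if "j < r" for c j
    by (rule sum.cong) (use assms that in auto)
  have e1: "(\<forall>j<r. (\<Sum>i<a. c i * A' i j) = 0) = (\<forall>j<r. (\<Sum>i<a. c i * A i j) = 0)" for c
    using s by auto
  have e2: "{j. j < r \<and> (\<Sum>i<a. c i * A' i j) \<noteq> 0} = {j. j < r \<and> (\<Sum>i<a. c i * A i j) \<noteq> 0}" for c
    using s by auto
  show ?thesis unfolding mds_generator_def e1 e2 ..
qed

lemma fix_pow_iter:
  fixes x :: "'a::monoid_mult"
  assumes "x ^ q = x"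
  shows "x ^ (q ^ m) = x"
proof (induction m)
  case 0 then show ?case by simp
next
  case (Suc m)
  have "x ^ (q ^ Suc m) = (x ^ q) ^ (q ^ m)" by (simp add: power_mult)
  then show ?case using assms Suc by simp
qed

lemma fix_clos:
  fixes x y :: "'F::field"
  assumes addQ: "\<And>x y::'F. (x + y) ^ Q = x ^ Q + y ^ Q" and Q0: "Q > 0"
    and "x ^ Q = x" "y ^ Q = y"
  shows "(- x / y) ^ Q = - x / y"
proof -
  have "(- x / y) ^ Q = (- x) ^ Q / y ^ Q" by (rule power_divide)
  also have "(- x) ^ Q = - x" using frob_neg[OF addQ Q0, of x] assms(3) by simp
  also have "y ^ Q = y" by (rule assms(4))
  finally show ?thesis .
qed

lemma exists_valid:
  fixes a r g h :: nat
  assumes a0: "0 < a" and ar: "a < r" and gh: "g * a + h < g * r"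
  shows "\<exists>S. S \<subseteq> {..<g * r} \<and> card S = g * a + h \<and> (\<forall>b<g. a \<le> card (S \<inter> {b * r..<(b + 1) * r}))"
proof -
  have r0: "r > 0" using ar by simp
  define A0 where "A0 = (\<Union>b\<in>{..<g}. {b * r..<b * r + a})"
  have blk: "x div r = b" if "x \<in> {b * r..<b * r + a}" for x b
    using that ar by (intro div_nat_eqI) (auto simp: mult.commute)
  have cA0: "card A0 = g * a"
  proof -
    have "card A0 = (\<Sum>b\<in>{..<g}. card {b * r..<b * r + a})"
      unfolding A0_def
    proof (rule card_UN_disjoint)
      show "\<forall>i\<in>{..<g}. \<forall>j\<in>{..<g}. i \<noteq> j \<longrightarrow> {i * r..<i * r + a} \<inter> {j * r..<j * r + a} = {}"
      proof (intro ballI impI)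
        fix i j assume "i \<in> {..<g}" "j \<in> {..<g}" "i \<noteq> j"
        show "{i * r..<i * r + a} \<inter> {j * r..<j * r + a} = {}"
        proof (rule ccontr)
          assume "{i * r..<i * r + a} \<inter> {j * r..<j * r + a} \<noteq> {}"
          then obtain x where "x \<in> {i * r..<i * r + a}" "x \<in> {j * r..<j * r + a}" by blast
          then have "x div r = i" "x div r = j" using blk by blast+
          then show False using \<open>i \<noteq> j\<close> by simp
        qed
      qed
    qed auto
    then show ?thesis by simp
  qed
  have A0sub: "A0 \<subseteq> {..<g * r}"
  proof
    fix x assume "x \<in> A0"
    then obtain b where b: "b < g" "b * r \<le> x" "x < b * r + a" by (auto simp: A0_def)
    have "x < b * r + r" using b ar by simp
    also have "\<dots> = Suc b * r" by simp
    also have "\<dots> \<le> g * r" using b by (intro mult_le_mono1) simp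
    finally show "x \<in> {..<g * r}" by simp
  qed
  define R0 where "R0 = {..<g * r} - A0"
  have cR0: "card R0 = g * r - g * a" unfolding R0_def using A0sub cA0
    by (simp add: card_Diff_subset finite_subset)
  have "h \<le> card R0" using cR0 gh by simp
  then obtain E where E: "E \<subseteq> R0" "card E = h" "finite E" by (rule obtain_subset_with_card_n)
  define S where "S = A0 \<union> E"
  have finA0: "finite A0" using A0sub finite_subset by blast
  have "S \<subseteq> {..<g * r}" using A0sub E by (auto simp: S_def R0_def)
  moreover have "card S = g * a + h"
  proof -
    have "A0 \<inter> E = {}" using E by (auto simp: R0_def)
    then show ?thesis using card_Un_disjoint[OF finA0 E(3)] cA0 E by (simp add: S_def)
  qed
  moreover have "\<forall>b<g. a \<le> card (S \<inter> {b * r..<(b + 1) * r})"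
  proof (intro allI impI)
    fix b assume b: "b < g"
    have sub: "{b * r..<b * r + a} \<subseteq> S \<inter> {b * r..<(b + 1) * r}"
      using b ar by (auto simp: S_def A0_def)
    have "a = card {b * r..<b * r + a}" by simp
    also have "\<dots> \<le> card (S \<inter> {b * r..<(b + 1) * r})" by (rule card_mono[OF _ sub]) simp
    finally show "a \<le> card (S \<inter> {b * r..<(b + 1) * r})" .
  qed
  ultimately show ?thesis by blast
qed

theorem lemma3p11:
  fixes q a r g h m n :: nat
  assumes "prime_power q"
    and "a > 0" and "r > 0" and "g > 0" and "h > 0" and "m > 0"
    and "a \<le> r" and "r \<le> q + 1" and "m \<ge> h + a" and "g*a + h < g*r"
    and "n = r*g"
    and "real (q ^ m) \<ge> real (m*n) / real r"
    and "card (UNIV :: 'F set) = q ^ (min (m*h) (m*n div r))"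
  shows "\<exists>H :: nat \<Rightarrow> nat \<Rightarrow> 'F::{field,finite}. MR_LRC_parity_check H g r h a"
proof -
  note a0 = assms(2) and r0 = assms(3) and g0 = assms(4) and h0 = assms(5) and m0 = assms(6)
    and rq = assms(8) and mha = assms(9) and gh = assms(10) and nrg = assms(11)
  obtain p k where p: "prime p" and k0': "k > 0" and qpk: "q = p ^ k"
    using assms(1) unfolding prime_power_def by blast
  have ar: "a < r"
  proof -
    have "g * a < g * r" using gh by linarith
    then show ?thesis by simp
  qed
  define s0 where "s0 = min h g"
  have s0pos: "s0 \<ge> 1" using h0 g0 by (simp add: s0_def)
  have mndiv: "m * n div r = m * g"
  proof -
    have eq: "m * n = r * (m * g)" using nrg by (simp add: mult_ac)
    have "m * n div r = r * (m * g) div r" by (simp only: eq)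
    also have "\<dots> = m * g" using r0 by simp
    finally show ?thesis .
  qed
  have minm: "min (m * h) (m * g) = m * s0" by (simp add: s0_def min_def)
  have cardF: "card (UNIV :: 'F set) = q ^ (m * s0)" using assms(13) mndiv minm by simp
  have p2: "p \<ge> 2" using p by (simp add: prime_ge_2_nat)
  have q2: "q \<ge> 2"
  proof -
    have "p ^ 1 \<le> p ^ k" using k0' p2 by (intro power_increasing) auto
    then show ?thesis using p2 qpk by simp
  qed
  have q0: "q > 0" using q2 by simp
  have charF: "CHAR('F) = p"
  proof -
    have "of_nat (card (UNIV :: 'F set)) = (0::'F)" by (rule of_nat_card_zero)
    then have "CHAR('F) dvd card (UNIV :: 'F set)" by (simp add: of_nat_eq_0_iff_char_dvd)
    then have "CHAR('F) dvd p ^ (k * (m * s0))" using cardF qpk by (simp add: power_mult)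
    then have "CHAR('F) dvd p" using char_prime prime_dvd_power by blast
    then show ?thesis using char_prime p primes_dvd_imp_eq by blast
  qed
  have addq: "(x + y) ^ q = x ^ q + y ^ q" for x y :: 'F
    by (rule freshmans_dream'[OF char_prime]) (simp add: charF qpk)
  define Q2 where "Q2 = q ^ m"
  have addQ2: "(x + y) ^ Q2 = x ^ Q2 + y ^ Q2" for x y :: 'F
    by (rule freshmans_dream'[OF char_prime, of _ "k * m"]) (simp add: charF qpk Q2_def power_mult)
  have Q22: "Q2 \<ge> 2"
  proof -
    have "q ^ 1 \<le> q ^ m" using m0 q2 by (intro power_increasing) auto
    then show ?thesis using q2 by (simp add: Q2_def)
  qed
  have Q20: "Q2 > 0" using Q22 by simp
  define K where "K = {x::'F. x ^ q = x}"
  define L where "L = {x::'F. x ^ Q2 = x}"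
  have cK: "card K = q"
  proof -
    have "m * s0 \<ge> 1" using m0 s0pos by simp
    then have "card K \<ge> q" unfolding K_def by (rule card_fix_ge[OF cardF _ q2])
    moreover have "card K \<le> q" unfolding K_def by (rule card_fix_le[OF q2])
    ultimately show ?thesis by simp
  qed
  have cL: "card L = Q2"
  proof -
    have cF2: "card (UNIV :: 'F set) = Q2 ^ s0" using cardF by (simp add: Q2_def power_mult)
    have "card L \<ge> Q2" unfolding L_def by (rule card_fix_ge[OF cF2 s0pos Q22])
    moreover have "card L \<le> Q2" unfolding L_def by (rule card_fix_le[OF Q22])
    ultimately show ?thesis by simp
  qed
  have KL: "x ^ Q2 = x" if "x ^ q = x" for x :: 'F
    unfolding Q2_def by (rule fix_pow_iter[OF that])
  obtain e0 where e0: "bij_betw e0 {0..<card K} K" using ex_bij_betw_nat_finite[of K] by auto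
  define pt where "pt k' = (if k' < q then Some (e0 k') else None)" for k'
  have ptinj: "inj_on pt {..<r}"
  proof (rule inj_onI)
    fix x y assume x: "x \<in> {..<r}" and y: "y \<in> {..<r}" and e: "pt x = pt y"
    show "x = y"
    proof (cases "x < q")
      case True
      then have "y < q" using e by (auto simp: pt_def split: if_splits)
      then have "e0 x = e0 y" using e True by (simp add: pt_def)
      then show ?thesis using e0 True \<open>y < q\<close> cK by (auto simp: bij_betw_def inj_on_def)
    next
      case False
      then have "\<not> y < q" using e by (auto simp: pt_def split: if_splits)
      then show ?thesis using False x y rq by simp
    qed
  qed
  have ptK: "\<forall>k' v. pt k' = Some v \<longrightarrow> v ^ q = v"
  proof (intro allI impI)
    fix k' v assume "pt k' = Some v"
    then have "k' < q" "v = e0 k'" by (auto simp: pt_def split: if_splits)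
    then have "v \<in> K" using e0 cK by (auto simp: bij_betw_def)
    then show "v ^ q = v" by (simp add: K_def)
  qed
  define k0 where "k0 = min r (a + h)"
  have closK: "\<forall>x\<in>K. \<forall>y\<in>K. - x / y \<in> K"
    unfolding K_def using fix_clos[OF addq q0] by simp
  have closL: "\<forall>x\<in>L. \<forall>y\<in>L. - x / y \<in> L"
    unfolding L_def using fix_clos[OF addQ2 Q20] by simp
  have "\<forall>k'<k0. card K ^ k' < card L"
  proof (intro allI impI)
    fix k' assume "k' < k0"
    then have "k' < m" using mha by (simp add: k0_def)
    then have "q ^ k' < q ^ m" using q2 by (intro power_strict_increasing) auto
    then show "card K ^ k' < card L" using cK cL by (simp add: Q2_def)
  qed
  then obtain \<omega> where \<omega>L': "\<forall>t<k0. \<omega> t \<in> L"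
    and \<omega>ind': "\<forall>e. (\<forall>t<k0. e t \<in> K) \<and> (\<Sum>t<k0. e t * \<omega> t) = 0 \<longrightarrow> (\<forall>t<k0. e t = 0)"
    using greedy_indep[OF closK] by blast
  have \<omega>L: "\<forall>t<k0. \<omega> t ^ Q2 = \<omega> t" using \<omega>L' by (simp add: L_def)
  have \<omega>ind: "\<forall>e. (\<forall>t<k0. e t ^ q = e t) \<and> (\<Sum>t<k0. e t * \<omega> t) = 0 \<longrightarrow> (\<forall>t<k0. e t = 0)"
    using \<omega>ind' by (simp add: K_def)
  have "\<forall>k'<s0. card L ^ k' < card (UNIV :: 'F set)"
  proof (intro allI impI)
    fix k' assume "k' < s0"
    then have "Q2 ^ k' < Q2 ^ s0" using Q22 by (intro power_strict_increasing) auto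
    then show "card L ^ k' < card (UNIV :: 'F set)" using cL cardF by (simp add: Q2_def power_mult)
  qed
  then obtain \<theta> :: "nat \<Rightarrow> 'F"
    where \<theta>ind': "\<forall>e. (\<forall>t<s0. e t \<in> L) \<and> (\<Sum>t<s0. e t * \<theta> t) = 0 \<longrightarrow> (\<forall>t<s0. e t = 0)"
    using greedy_indep[OF closL, of s0 UNIV] by blast
  have \<theta>ind: "\<forall>e. (\<forall>t<s0. e t ^ Q2 = e t) \<and> (\<Sum>t<s0. e t * \<theta> t) = 0 \<longrightarrow> (\<forall>t<s0. e t = 0)"
    using \<theta>ind' by (simp add: L_def)
  have gL: "g \<le> card L"
  proof -
    have "real (m * n) / real r = real (m * g)" using nrg r0 by (simp add: field_simps)
    then have "real (m * g) \<le> real (q ^ m)" using assms(12) by simp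
    then have "m * g \<le> q ^ m" by (simp only: of_nat_le_iff)
    moreover have "g \<le> m * g" using m0 by simp
    ultimately have "g \<le> q ^ m" by (rule le_trans[rotated])
    then show ?thesis using cL by (simp add: Q2_def)
  qed
  obtain e1 where e1: "bij_betw e1 {0..<card L} L" using ex_bij_betw_nat_finite[of L] by auto
  define \<xi> where "\<xi> b = (if b < card L then e1 b else 0)" for b
  have \<xi>inj: "inj_on \<xi> {..<g}"
  proof (rule inj_onI)
    fix x y assume "x \<in> {..<g}" "y \<in> {..<g}" "\<xi> x = \<xi> y"
    then have "x < card L" "y < card L" "e1 x = e1 y" using gL by (auto simp: \<xi>_def)
    then show "x = y" using e1 by (auto simp: bij_betw_def inj_on_def)
  qed
  have \<xi>L: "\<forall>b. \<xi> b ^ Q2 = \<xi> b"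
  proof
    fix b show "\<xi> b ^ Q2 = \<xi> b"
    proof (cases "b < card L")
      case True
      then have "e1 b \<in> L" using e1 by (auto simp: bij_betw_def)
      then show ?thesis using True by (simp add: \<xi>_def L_def)
    next
      case False then show ?thesis using Q20 by (simp add: \<xi>_def)
    qed
  qed
  define H where "H = Hmat q g r a pt (betaf r k0 s0 pt \<omega> \<theta> \<xi>)"
  have MRp: "cols_indep H (g * a + h) S"
    if "S \<subseteq> {..<g * r}" "card S = g * a + h" "\<forall>b<g. a \<le> card (S \<inter> {b * r..<(b + 1) * r})" for S
    unfolding H_def
    by (rule MR[OF addq q0 addQ2 Q20 KL ptK ptinj \<omega>L \<omega>ind \<theta>ind \<xi>L \<xi>inj k0_def s0_def a0 r0 that])
  have c2: "\<forall>i<g * a. \<forall>j<g * r. j div r \<noteq> i div a \<longrightarrow> H i j = 0"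
    by (simp add: H_def Hmat_def)
  have c3: "\<forall>b<g. mds_generator (\<lambda>i j. H (b * a + i) (b * r + j)) a r"
  proof (intro allI impI)
    fix b assume b: "b < g"
    have "\<forall>i<a. \<forall>j<r. H (b * a + i) (b * r + j) = colv a (pt j) i"
    proof (intro allI impI)
      fix i j assume i: "i < a" and j: "j < r"
      have "b * a + i < g * a" by (rule lt_ba[OF b i])
      moreover have "(b * r + j) div r = b" "(b * r + j) mod r = j" using j by auto
      moreover have "(b * a + i) div a = b" "(b * a + i) mod a = i" using i by auto
      ultimately show "H (b * a + i) (b * r + j) = colv a (pt j) i" by (simp add: H_def Hmat_def)
    qed
    then have "mds_generator (\<lambda>i j. H (b * a + i) (b * r + j)) a r = mds_generator (\<lambda>i j. colv a (pt j) i) a r"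
      by (rule mds_cong)
    then show "mds_generator (\<lambda>i j. H (b * a + i) (b * r + j)) a r"
      using mds_colv[OF ptinj a0 ar] by simp
  qed
  obtain S0 where S0: "S0 \<subseteq> {..<g * r}" "card S0 = g * a + h" "\<forall>b<g. a \<le> card (S0 \<inter> {b * r..<(b + 1) * r})"
    using exists_valid[OF a0 ar gh] by blast
  have c1: "\<forall>c. (\<forall>j<g * r. (\<Sum>i<g * a + h. c i * H i j) = 0) \<longrightarrow> (\<forall>i<g * a + h. c i = 0)"
  proof (rule allI, rule impI)
    fix c assume C: "\<forall>j<g * r. (\<Sum>i<g * a + h. c i * H i j) = 0"
    have ci: "cols_indep H (g * a + h) S0" by (rule MRp[OF S0])
    have indep: "\<forall>x. (\<forall>i\<in>{..<g * a + h}. (\<Sum>j\<in>S0. x j * H i j) = 0) \<longrightarrow> (\<forall>j\<in>S0. x j = 0)"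
      using ci unfolding cols_indep_def by simp
    have finS0: "finite S0" using S0(1) finite_subset by blast
    have "\<forall>i\<in>{..<g * a + h}. c i = 0"
      by (rule square_rows_indep[OF finite_lessThan finS0 _ indep]) (use S0 C in auto)
    then show "\<forall>i<g * a + h. c i = 0" by simp
  qed
  have "MR_LRC_parity_check H g r h a"
    unfolding MR_LRC_parity_check_def using c1 c2 c3 MRp by blast
  then show ?thesis by blast
qed

end
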